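(* Let $H_0$ be a Hermitian operator on a finite-dimensional Hilbert space with ground-space projection $P_0$, $Q_0=I-P_0$, ground energy $E_0$, $G=Q_0(E_0I-H_0)^{-1}Q_0$, and $V$ Hermitian. Suppose $L$ is an integer with $P_0\Gamma(n)P_0\subseteq\mathbb{C}P_0$ for all $n<L$. Then for any $k\ge1$ and integers $n_1,\dots,n_{2k}\in\mathbb{N}$ with $\sum_{j=1}^{2k}n_j<L$, and any $T_{n_j}\in\Gamma^\star(n_j)$, $j=1,\dots,2k$, we have $T_{n_1}\cdots T_{n_{2k}}P_0\in\mathbb{C}P_0$ and $P_0T_{n_1}\cdots T_{n_{2k}}\in\mathbb{C}P_0$.
   Context: $\Gamma(n)$ is the linear span of operators $Z_0VZ_1V\cdots Z_{n-1}VZ_n$ ($n$ factors of $V$) with each $Z_j\in\{P_0,Q_0\}\cup\{G^m:m\in\mathbb{N}\}$; $\Gamma^\star(n)\subseteq\Gamma(n)$ is the span of such products that additionally satisfy $Z_0Z_n=Z_nZ_0=0$. *)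

theory Defs
  imports "HOL-Analysis.Analysis"
begin

type_synonym 'n cmat = "complex ^ 'n ^ 'n"

text \<open>Operators on the finite-dimensional Hilbert space C^n are n x n complex matrices.\<close>

definition adjoint_mat :: "'n::finite cmat \<Rightarrow> 'n cmat" where
  "adjoint_mat A = (\<chi> i j. cnj (A $ j $ i))"

definition hermitian :: "'n::finite cmat \<Rightarrow> bool" where
  "hermitian A \<longleftrightarrow> adjoint_mat A = A"

definition cscale :: "complex \<Rightarrow> 'n::finite cmat \<Rightarrow> 'n cmat" where
  "cscale c A = (\<chi> i j. c * A $ i $ j)"

definition is_eigenvalue :: "'n::finite cmat \<Rightarrow> complex \<Rightarrow> bool" where
  "is_eigenvalue A c \<longleftrightarrow> (\<exists>v. v \<noteq> 0 \<and> A *v v = c *s v)"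

text \<open>Ground energy: the smallest eigenvalue of a Hermitian operator.\<close>
definition ground_energy :: "'n::finite cmat \<Rightarrow> real" where
  "ground_energy H = (THE e. is_eigenvalue H (complex_of_real e) \<and>
      (\<forall>c. is_eigenvalue H c \<longrightarrow> e \<le> Re c))"

text \<open>Orthogonal projection onto the ground space (eigenspace of the ground energy).\<close>
definition ground_proj :: "'n::finite cmat \<Rightarrow> 'n cmat" where
  "ground_proj H = (THE P. hermitian P \<and> P ** P = P \<and>
      range (\<lambda>x. P *v x) = {v. H *v v = complex_of_real (ground_energy H) *s v})"

definition excited_proj :: "'n::finite cmat \<Rightarrow> 'n cmat" where
  "excited_proj H = mat 1 - ground_proj H"

text \<open>Reduced resolvent G = Q0 (E0 I - H0)^{-1} Q0, where the inverse is taken on the range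
  of Q0 (on which E0 I - H0 is invertible) and G vanishes on the ground space.\<close>
definition reduced_resolvent :: "'n::finite cmat \<Rightarrow> 'n cmat" where
  "reduced_resolvent H = (THE G.
      G ** (mat (complex_of_real (ground_energy H)) - H) = excited_proj H \<and>
      G ** ground_proj H = 0 \<and> ground_proj H ** G = 0)"

fun mpow :: "'n::finite cmat \<Rightarrow> nat \<Rightarrow> 'n cmat" where
  "mpow A 0 = mat 1"
| "mpow A (Suc m) = A ** mpow A m"

text \<open>Z_0 V Z_1 V ... V Z_n for the list [Z_0,...,Z_n].\<close>
fun word_prod :: "'n::finite cmat \<Rightarrow> 'n cmat list \<Rightarrow> 'n cmat" where
  "word_prod V [] = mat 1"
| "word_prod V [Z] = Z"
| "word_prod V (Z # Zs) = Z ** V ** word_prod V Zs"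

text \<open>Complex linear span of a set of matrices.\<close>
inductive_set cspan :: "'n::finite cmat set \<Rightarrow> 'n cmat set" for S where
  zero: "0 \<in> cspan S"
| base: "A \<in> S \<Longrightarrow> A \<in> cspan S"
| add: "A \<in> cspan S \<Longrightarrow> B \<in> cspan S \<Longrightarrow> A + B \<in> cspan S"
| scale: "A \<in> cspan S \<Longrightarrow> cscale c A \<in> cspan S"

definition Zset :: "'n::finite cmat \<Rightarrow> 'n cmat set" where
  "Zset H = {ground_proj H, excited_proj H} \<union> {mpow (reduced_resolvent H) m | m. m \<ge> 1}"

definition Gamma :: "'n::finite cmat \<Rightarrow> 'n cmat \<Rightarrow> nat \<Rightarrow> 'n cmat set" where
  "Gamma H V n = cspan {word_prod V Zs | Zs. length Zs = Suc n \<and> set Zs \<subseteq> Zset H}"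

definition Gamma_star :: "'n::finite cmat \<Rightarrow> 'n cmat \<Rightarrow> nat \<Rightarrow> 'n cmat set" where
  "Gamma_star H V n = cspan {word_prod V Zs | Zs. length Zs = Suc n \<and> set Zs \<subseteq> Zset H
      \<and> hd Zs ** last Zs = 0 \<and> last Zs ** hd Zs = 0}"

definition CP0 :: "'n::finite cmat \<Rightarrow> 'n cmat set" where
  "CP0 H = {cscale c (ground_proj H) | c. True}"

end

theory Submission
  imports Defs
begin

lemma mm_rdistrib: "((A::'a::semiring_1^'n^'m) + B) ** C = A ** C + B ** C"
  by (simp add: matrix_matrix_mult_def vec_eq_iff sum.distrib distrib_right)
lemma mm_rdiff: "((A::'a::ring_1^'n^'m) - B) ** C = A ** C - B ** C"
  by (simp add: matrix_matrix_mult_def vec_eq_iff sum_subtractf left_diff_distrib)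
lemma mm_ldiff: "(C::'a::ring_1^'n^'m) ** (A - B) = C ** A - C ** B"
  by (simp add: matrix_matrix_mult_def vec_eq_iff sum_subtractf right_diff_distrib)
lemma mm_rzero: "(A::'a::semiring_1^'n^'m) ** (0::'a^'k^'n) = 0"
  by (simp add: matrix_matrix_mult_def vec_eq_iff)

lemma adjoint_mult: "adjoint_mat (A ** B) = adjoint_mat B ** adjoint_mat (A::'n::finite cmat)"
  by (simp add: adjoint_mat_def matrix_matrix_mult_def vec_eq_iff mult.commute)

lemma adjoint_diff: "adjoint_mat (A - B) = adjoint_mat A - adjoint_mat (B::'n::finite cmat)"
  by (simp add: adjoint_mat_def vec_eq_iff)

lemma adjoint_mat_real: "adjoint_mat (mat (complex_of_real e) :: 'n::finite cmat) = mat (complex_of_real e)"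
  by (simp add: adjoint_mat_def vec_eq_iff mat_def)

definition cinner :: "complex^'n::finite \<Rightarrow> complex^'n \<Rightarrow> complex" where
  "cinner u v = (\<Sum>i\<in>UNIV. u$i * cnj (v$i))"

lemma inner_cinner: "inner u v = Re (cinner u v)"
  by (simp add: inner_vec_def cinner_def inner_complex_def Re_sum)

lemma cinner_scale_left: "cinner (c *s u) v = c * cinner u v"
  by (simp add: cinner_def sum_distrib_left mult.assoc)
lemma cinner_scale_right: "cinner u (c *s v) = cnj c * cinner u v"
  by (simp add: cinner_def sum_distrib_left algebra_simps)
lemma cinner_add_left: "cinner (u + w) v = cinner u v + cinner w v"
  by (simp add: cinner_def sum.distrib algebra_simps)
lemma cinner_diff_left: "cinner (u - w) v = cinner u v - cinner w v"
  by (simp add: cinner_def sum_subtractf algebra_simps)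
lemma cinner_add_right: "cinner u (v + w) = cinner u v + cinner u w"
  by (simp add: cinner_def sum.distrib algebra_simps)
lemma cinner_diff_right: "cinner u (v - w) = cinner u v - cinner u w"
  by (simp add: cinner_def sum_subtractf algebra_simps)
lemma cinner_cnj: "cinner v u = cnj (cinner u v)"
  by (simp add: cinner_def mult.commute)
lemma cinner_axis: "cinner u (axis i 1) = u $ i"
  by (simp add: cinner_def axis_def if_distrib cong: if_cong)

lemma scaleR_cvec: "(r *\<^sub>R (x::complex^'n)) = complex_of_real r *s x"
proof (rule vec_eq_iff[THEN iffD2], rule allI)
  fix i show "(r *\<^sub>R x) $ i = (complex_of_real r *s x) $ i"
    by (simp only: vector_scaleR_component vector_smult_component) (simp add: scaleR_conv_of_real)
qed

lemma proj_exists: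
  fixes S :: "(complex^'n::finite) set"
  assumes S0: "0 \<in> S" and Sadd: "\<And>x y. x \<in> S \<Longrightarrow> y \<in> S \<Longrightarrow> x + y \<in> S"
    and Sscale: "\<And>c x. x \<in> S \<Longrightarrow> c *s x \<in> S"
  shows "\<exists>P. hermitian P \<and> P ** P = P \<and> range (\<lambda>x. P *v x) = S"
proof -
  have sub: "subspace S"
    unfolding subspace_def using S0 Sadd Sscale by (simp add: scaleR_cvec)
  hence spanS: "span S = S" by (simp add: span_eq_iff)
  \<comment> \<open>complex orthogonality\<close>
  have corth: "cinner u w = 0" if "\<forall>w\<in>S. orthogonal u w" "w \<in> S" for u w
  proof -
    have "Re (cinner u w) = 0" using that by (simp add: orthogonal_def inner_cinner)
    moreover have "Re (cinner u (\<i> *s w)) = 0" using that Sscale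
      by (simp add: orthogonal_def inner_cinner)
    ultimately show ?thesis by (simp add: cinner_scale_right complex_eq_iff)
  qed
  have ex: "\<exists>y. y \<in> S \<and> (\<forall>w\<in>S. orthogonal (x - y) w)" for x
  proof -
    obtain y z where "y \<in> span S" "\<And>w. w \<in> span S \<Longrightarrow> orthogonal z w" "x = y + z"
      using orthogonal_subspace_decomp_exists[of S x] by blast
    then show ?thesis using spanS by (intro exI[of _ y]) auto
  qed
  have uniq: "y = y'" if "y \<in> S" "\<forall>w\<in>S. orthogonal (x - y) w" "y' \<in> S" "\<forall>w\<in>S. orthogonal (x - y') w" for x y y'
  proof -
    have d: "y - y' \<in> S" using that sub by (simp add: subspace_diff)
    have "orthogonal (y - y') (y - y')"
    proof -
      have "y - y' = (x - y') - (x - y)" by simp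
      moreover have "orthogonal (x - y') (y - y')" "orthogonal (x - y) (y - y')" using that d by auto
      ultimately show ?thesis by (metis orthogonal_clauses(10))
    qed
    thus ?thesis by (simp add: orthogonal_self)
  qed
  define p where "p x = (SOME y. y \<in> S \<and> (\<forall>w\<in>S. orthogonal (x - y) w))" for x
  have pS: "p x \<in> S" and porth: "\<forall>w\<in>S. orthogonal (x - p x) w" for x
    using someI_ex[OF ex[of x]] unfolding p_def by auto
  have pchar: "p x = y" if "y \<in> S" "\<And>w. w \<in> S \<Longrightarrow> cinner (x - y) w = 0" for x y
    using uniq[OF pS[of x] porth[of x] that(1)] that(2)
    by (simp add: orthogonal_def inner_cinner)
  have pc: "cinner (x - p x) w = 0" if "w \<in> S" for x w
    using corth porth that by blast
  have lin: "Vector_Spaces.linear (*s) (*s) p"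
    unfolding Vector_Spaces.linear_iff
  proof (intro conjI allI vec.vector_space_axioms)
    fix x y show "p (x + y) = p x + p y"
      apply (rule pchar)
      using pS Sadd apply blast
    proof -
      fix w assume w: "w \<in> S"
      have "x + y - (p x + p y) = (x - p x) + (y - p y)" by simp
      hence "cinner (x + y - (p x + p y)) w = cinner (x - p x) w + cinner (y - p y) w"
        by (simp only: cinner_add_left)
      thus "cinner (x + y - (p x + p y)) w = 0" using pc[OF w] by simp
    qed
  next
    fix c x show "p (c *s x) = c *s p x"
      apply (rule pchar)
      using pS Sscale apply blast
    proof -
      fix w assume w: "w \<in> S"
      have "c *s x - c *s p x = c *s (x - p x)" by (simp add: vector_ssub_ldistrib)
      hence "cinner (c *s x - c *s p x) w = c * cinner (x - p x) w"
        by (simp only: cinner_scale_left)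
      thus "cinner (c *s x - c *s p x) w = 0" using pc[OF w] by simp
    qed
  qed
  define P where "P = matrix p"
  have Pv: "P *v x = p x" for x unfolding P_def using matrix_works[OF lin] .
  have pp: "p (p x) = p x" for x by (rule pchar) (auto simp: pS cinner_def)
  have sym: "cinner (p x) y = cinner x (p y)" for x y
  proof -
    have "cinner (y - p y) (p x) = 0" using pc pS by blast
    hence "cinner (p x) (y - p y) = 0" by (metis cinner_cnj complex_cnj_zero)
    moreover have "cinner (x - p x) (p y) = 0" using pc pS by blast
    ultimately show ?thesis by (simp add: cinner_diff_left cinner_diff_right)
  qed
  have herm: "hermitian P"
    unfolding hermitian_def adjoint_mat_def
  proof (simp add: vec_eq_iff, intro allI)
    fix i j
    have "P $ j $ i = p (axis i 1) $ j" by (simp add: P_def matrix_def)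
    moreover have "P $ i $ j = p (axis j 1) $ i" by (simp add: P_def matrix_def)
    moreover have "cnj (p (axis i 1) $ j) = p (axis j 1) $ i"
      using sym[of "axis j 1" "axis i 1"] by (metis cinner_axis cinner_cnj)
    ultimately show "cnj (P $ j $ i) = P $ i $ j" by simp
  qed
  have "P ** P = P" unfolding matrix_eq by (simp add: Pv pp flip: matrix_vector_mul_assoc)
  moreover have "range (\<lambda>x. P *v x) = S"
  proof
    show "range (\<lambda>x. P *v x) \<subseteq> S" using pS by (auto simp: Pv)
    show "S \<subseteq> range (\<lambda>x. P *v x)"
    proof
      fix y assume "y \<in> S"
      hence "p y = y" by (intro pchar) (auto simp: cinner_def)
      thus "y \<in> range (\<lambda>x. P *v x)" by (metis Pv rangeI)
    qed
  qed
  ultimately show ?thesis using herm by blast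
qed
lemma proj_unique:
  assumes "hermitian P" "P ** P = P" "range (\<lambda>x. P *v x) = S"
    and "hermitian P'" "P' ** P' = P'" "range (\<lambda>x. P' *v x) = S"
  shows "P = (P'::'n::finite cmat)"
proof -
  have fix1: "A *v (B *v x) = B *v x" if h1: "A ** A = A" and h2: "range (\<lambda>x. A *v x) = range (\<lambda>x. B *v x)" for A B :: "'n cmat" and x
  proof -
    obtain y where "B *v x = A *v y" using h2 by (metis rangeI image_iff)
    thus ?thesis by (simp add: matrix_vector_mul_assoc h1)
  qed
  have 1: "P' ** P = P" unfolding matrix_eq using fix1[of P' P] assms by (simp flip: matrix_vector_mul_assoc)
  have 2: "P ** P' = P'" unfolding matrix_eq using fix1[of P P'] assms by (simp flip: matrix_vector_mul_assoc)
  have "P = adjoint_mat P" using assms(1) by (simp add: hermitian_def)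
  also have "\<dots> = adjoint_mat P ** adjoint_mat P'" using 1 by (metis adjoint_mult)
  also have "\<dots> = P'" using assms 2 by (simp add: hermitian_def)
  finally show ?thesis .
qed

lemma mat_cvec: "(mat c :: 'a::semiring_1^'n::finite^'n) *v y = c *s y"
  by (simp add: vec_eq_iff matrix_vector_mult_def mat_def if_distribR if_distrib[of "\<lambda>z. z * _"] cong: if_cong)

lemma mv_diff: "((A::'a::ring_1^'n::finite^'m) - B) *v y = A *v y - B *v y"
  by (simp add: vec_eq_iff matrix_vector_mult_def sum_subtractf left_diff_distrib)

lemma mv_add: "((A::'a::semiring_1^'n::finite^'m) + B) *v y = A *v y + B *v y"
  by (simp add: vec_eq_iff matrix_vector_mult_def sum.distrib distrib_right)

lemma adjoint_zero: "adjoint_mat (0::'n::finite cmat) = 0"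
  by (simp add: adjoint_mat_def vec_eq_iff)

lemma mpow_Suc': "mpow A (Suc m) = mpow A m ** A"
  by (induction m) (simp_all add: matrix_mul_assoc)

lemma mpow_add: "mpow A (a + b) = mpow A a ** mpow A b"
  by (induction a) (simp_all add: matrix_mul_assoc)

lemma wp_cons: "Y \<noteq> [] \<Longrightarrow> word_prod V (Z # Y) = Z ** V ** word_prod V Y"
  by (cases Y) auto

lemma wp_zero: "0 \<in> set Zs \<Longrightarrow> word_prod V Zs = (0::'n::finite cmat)"
  by (induction V Zs rule: word_prod.induct) (auto simp: mm_rzero)

lemma wp_hd: "Zs \<noteq> [] \<Longrightarrow> \<exists>X. word_prod V Zs = hd Zs ** (X::'n::finite cmat)"
proof (induction V Zs rule: word_prod.induct)
  case (2 V Z) thus ?case by (intro exI[of _ "mat 1"]) simp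
next
  case (3 V Z v va) thus ?case by (auto simp: matrix_mul_assoc[symmetric])
qed simp

lemma wp_last: "Zs \<noteq> [] \<Longrightarrow> \<exists>Y. word_prod V Zs = (Y::'n::finite cmat) ** last Zs"
proof (induction V Zs rule: word_prod.induct)
  case (2 V Z) thus ?case by (intro exI[of _ "mat 1"]) simp
next
  case (3 V Z v va)
  then obtain Y where "word_prod V (v # va) = Y ** last (v # va)" by blast
  thus ?case by (intro exI[of _ "Z ** V ** Y"]) (simp add: matrix_mul_assoc)
qed simp

lemma wp_mult: "Zs \<noteq> [] \<Longrightarrow> Ws \<noteq> [] \<Longrightarrow>
  word_prod V Zs ** word_prod V Ws = word_prod V (butlast Zs @ (last Zs ** hd Ws) # tl Ws)"
proof (induction Zs)
  case Nil thus ?case by simp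
next
  case (Cons Z Zs)
  show ?case
  proof (cases "Zs = []")
    case True
    then show ?thesis using Cons.prems
      by (cases Ws; cases "tl Ws") (auto simp: matrix_mul_assoc)
  next
    case False
    have "word_prod V (Z # Zs) ** word_prod V Ws = Z ** V ** (word_prod V Zs ** word_prod V Ws)"
      using False by (simp add: wp_cons matrix_mul_assoc)
    also have "\<dots> = Z ** V ** word_prod V (butlast Zs @ (last Zs ** hd Ws) # tl Ws)"
      using Cons False by simp
    also have "\<dots> = word_prod V (butlast (Z # Zs) @ (last (Z # Zs) ** hd Ws) # tl Ws)"
      using False by (simp add: wp_cons)
    finally show ?thesis .
  qed
qed

lemma cscale_mult_left: "cscale c A ** B = cscale c (A ** (B::'n::finite cmat))"
  by (simp add: cscale_def matrix_matrix_mult_def vec_eq_iff sum_distrib_left mult.assoc)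

lemma cscale_mult_right: "A ** cscale c B = cscale c (A ** (B::'n::finite cmat))"
  by (simp add: cscale_def matrix_matrix_mult_def vec_eq_iff sum_distrib_left algebra_simps)

lemma cscale_zero: "cscale c (0::'n::finite cmat) = 0"
  by (simp add: cscale_def vec_eq_iff)

lemma cscale_add: "cscale c (A + B) = cscale c A + cscale c (B::'n::finite cmat)"
  by (simp add: cscale_def vec_eq_iff algebra_simps)

lemma cspan_mono: "A \<in> cspan S \<Longrightarrow> S \<subseteq> T \<Longrightarrow> A \<in> cspan T"
  by (induction A rule: cspan.induct) (auto intro: cspan.intros)

lemma cspan_mult:
  assumes gen: "\<And>a b. a \<in> S \<Longrightarrow> b \<in> T \<Longrightarrow> a ** b \<in> cspan U"
    and A: "A \<in> cspan S" and B: "B \<in> cspan T"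
  shows "A ** B \<in> cspan (U::'n::finite cmat set)"
  using A
proof (induction A rule: cspan.induct)
  case zero thus ?case by (simp add: times0_left cspan.zero)
next
  case (base a)
  from B show ?case
  proof (induction B rule: cspan.induct)
    case zero thus ?case by (simp add: mm_rzero cspan.zero)
  next
    case (base b) thus ?case using gen \<open>a \<in> S\<close> by blast
  next
    case (add B1 B2) thus ?case by (simp add: matrix_add_ldistrib cspan.add)
  next
    case (scale B1 c) thus ?case by (simp add: cscale_mult_right cspan.scale)
  qed
next
  case (add A1 A2) thus ?case by (simp add: mm_rdistrib cspan.add)
next
  case (scale A1 c) thus ?case by (simp add: cscale_mult_left cspan.scale)
qed

lemma split_mid:
  assumes "P + Q = mat 1" "P ** P = P" "Q ** Q = Q"
  shows "A ** (B ** C) ** D = (A ** B ** P) ** (P ** C ** D) + (A ** B ** Q) ** (Q ** C ** (D::'n::finite cmat))"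
proof -
  have "(A ** B ** P) ** (P ** C ** D) = A ** B ** (P ** P) ** C ** D" by (simp add: matrix_mul_assoc)
  moreover have "(A ** B ** Q) ** (Q ** C ** D) = A ** B ** (Q ** Q) ** C ** D" by (simp add: matrix_mul_assoc)
  moreover have "A ** B ** P ** C ** D + A ** B ** Q ** C ** D = A ** B ** (P + Q) ** C ** D"
    by (simp add: matrix_add_ldistrib mm_rdistrib)
  ultimately show ?thesis using assms by (simp add: matrix_mul_assoc)
qed

context
  fixes H0 :: "'n::finite cmat"
  assumes herm: "hermitian H0"
begin

abbreviation "E0 \<equiv> complex_of_real (ground_energy H0)"
abbreviation "PP \<equiv> ground_proj H0"
abbreviation "QQ \<equiv> excited_proj H0"
abbreviation "GG \<equiv> reduced_resolvent H0"
abbreviation "MM \<equiv> mat E0 - H0"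

lemma gp_props: "hermitian PP \<and> PP ** PP = PP \<and> range (\<lambda>x. PP *v x) = {v. H0 *v v = E0 *s v}"
proof -
  let ?S = "{v. H0 *v v = E0 *s v}"
  have "\<exists>P. hermitian P \<and> P ** P = P \<and> range (\<lambda>x. P *v x) = ?S"
    by (rule proj_exists) (auto simp: vec.add vec.scale vector_add_ldistrib vector_smult_assoc mult.commute)
  then have "\<exists>!P. hermitian P \<and> P ** P = P \<and> range (\<lambda>x. P *v x) = ?S"
    using proj_unique by blast
  thus ?thesis unfolding ground_proj_def by (rule theI')
qed

lemma P_herm: "hermitian PP" and P_idem: "PP ** PP = PP" using gp_props by auto

lemma M_herm: "hermitian MM"
  using herm by (simp add: hermitian_def adjoint_diff adjoint_mat_real)

lemma MP: "MM ** PP = 0"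
  unfolding matrix_eq
proof
  fix x
  have "PP *v x \<in> range (\<lambda>x. PP *v x)" by blast
  hence "H0 *v (PP *v x) = E0 *s (PP *v x)" using gp_props by auto
  thus "MM ** PP *v x = 0 *v x" by (simp add: mv_diff mat_cvec flip: matrix_vector_mul_assoc)
qed

lemma PM: "PP ** MM = 0"
proof -
  have "adjoint_mat (MM ** PP) = 0" using MP adjoint_zero by simp
  thus ?thesis using P_herm M_herm by (simp add: adjoint_mult hermitian_def)
qed

lemma kerM: "MM *v v = 0 \<Longrightarrow> PP *v v = v"
proof -
  assume "MM *v v = 0"
  hence "v \<in> {v. H0 *v v = E0 *s v}" by (simp add: mv_diff mat_cvec)
  then obtain y where "v = PP *v y" using gp_props by (metis (no_types, lifting) imageE)
  thus ?thesis using P_idem by (simp add: matrix_vector_mul_assoc)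
qed

lemma MP_inv: "\<exists>B. B ** (MM + PP) = mat 1 \<and> (MM + PP) ** B = mat 1"
proof -
  have "\<forall>x. (MM + PP) *v x = 0 \<longrightarrow> x = 0"
  proof (intro allI impI)
    fix x assume h: "(MM + PP) *v x = 0"
    hence "PP *v ((MM + PP) *v x) = 0" by simp
    hence "PP *v x = 0" using PM P_idem
      by (simp add: matrix_vector_mul_assoc matrix_vector_right_distrib mv_add)
    hence "MM *v x = 0" using h by (simp add: mv_add)
    thus "x = 0" using kerM \<open>PP *v x = 0\<close> by metis
  qed
  then obtain B where "B ** (MM + PP) = mat 1" using matrix_left_invertible_ker by blast
  thus ?thesis using matrix_left_right_inverse by blast
qed

lemma PQ_sum: "PP + QQ = mat 1" by (simp add: excited_proj_def)
lemma PQ: "PP ** QQ = 0" by (simp add: excited_proj_def mm_ldiff P_idem)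
lemma QP: "QQ ** PP = 0" by (simp add: excited_proj_def mm_rdiff P_idem)
lemma Q_idem: "QQ ** QQ = QQ"
  by (simp add: excited_proj_def mm_rdiff mm_ldiff P_idem)

lemma G_props: "GG ** MM = QQ \<and> GG ** PP = 0 \<and> PP ** GG = 0"
proof -
  obtain B where B1: "B ** (MM + PP) = mat 1" and B2: "(MM + PP) ** B = mat 1" using MP_inv by blast
  have BP: "B ** PP = PP"
  proof -
    have "(MM + PP) ** PP = PP" by (simp add: mm_rdistrib MP P_idem)
    hence "B ** ((MM + PP) ** PP) = B ** PP" by simp
    thus ?thesis by (simp add: matrix_mul_assoc B1)
  qed
  have BM: "B ** MM = QQ"
  proof -
    have "B ** MM = B ** ((MM + PP) - PP)" by simp
    also have "\<dots> = mat 1 - PP" by (simp only: mm_ldiff B1 BP)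
    finally show ?thesis by (simp add: excited_proj_def)
  qed
  let ?G = "QQ ** B"
  have ex: "?G ** MM = QQ \<and> ?G ** PP = 0 \<and> PP ** ?G = 0"
  proof (intro conjI)
    show "?G ** MM = QQ" by (simp only: matrix_mul_assoc[symmetric] BM Q_idem)
    show "?G ** PP = 0" by (simp only: matrix_mul_assoc[symmetric] BP QP)
    show "PP ** ?G = 0" by (simp only: matrix_mul_assoc PQ times0_left)
  qed
  have un: "G = ?G" if "G ** MM = QQ \<and> G ** PP = 0 \<and> PP ** G = 0" for G
  proof -
    have "G ** (MM + PP) = QQ" using that by (simp add: matrix_add_ldistrib)
    hence "G ** (MM + PP) ** B = QQ ** B" by simp
    thus ?thesis by (simp only: matrix_mul_assoc[symmetric] B2 matrix_mul_rid)
  qed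
  have "\<exists>!G. G ** MM = QQ \<and> G ** PP = 0 \<and> PP ** G = 0" using ex un by blast
  thus ?thesis unfolding reduced_resolvent_def excited_proj_def by (rule theI')
qed

lemma GM: "GG ** MM = QQ" and GP: "GG ** PP = 0" and PG: "PP ** GG = 0" using G_props by auto

lemma GQ: "GG ** QQ = GG" by (simp add: excited_proj_def mm_ldiff GP)
lemma QG: "QQ ** GG = GG" by (simp add: excited_proj_def mm_rdiff PG)
lemma QM: "QQ ** MM = MM" by (simp add: excited_proj_def mm_rdiff PM)


lemma GM_pow: "mpow GG (Suc m) ** mpow MM (Suc m) = QQ"
proof (induction m)
  case 0 thus ?case using GM by simp
next
  case (Suc m)
  have "mpow GG (Suc (Suc m)) ** mpow MM (Suc (Suc m)) = GG ** (mpow GG (Suc m) ** mpow MM (Suc m)) ** MM"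
    by (simp only: mpow.simps(2)[of GG "Suc m"] mpow_Suc'[of MM "Suc m"] matrix_mul_assoc)
  also have "\<dots> = QQ" using Suc GQ GM by simp
  finally show ?case .
qed

lemma Gpow_zero: "m \<ge> 1 \<Longrightarrow> mpow GG m = 0 \<Longrightarrow> QQ = 0"
proof -
  assume "m \<ge> 1" "mpow GG m = 0"
  then obtain k where "m = Suc k" "mpow GG (Suc k) = 0" by (cases m) auto
  thus "QQ = 0" using GM_pow[of k] by (simp add: times0_left)
qed


lemma Gpow_facts:
  assumes "m \<ge> 1"
  shows "PP ** mpow GG m = 0" "mpow GG m ** PP = 0" "QQ ** mpow GG m = mpow GG m" "mpow GG m ** QQ = mpow GG m"
proof -
  obtain k where m: "m = Suc k" using assms by (cases m) auto
  show "PP ** mpow GG m = 0" unfolding m mpow.simps by (simp only: matrix_mul_assoc PG times0_left)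
  show "QQ ** mpow GG m = mpow GG m" unfolding m mpow.simps by (simp only: matrix_mul_assoc QG)
  show "mpow GG m ** PP = 0" unfolding m mpow_Suc' by (simp only: matrix_mul_assoc[symmetric] GP mm_rzero)
  show "mpow GG m ** QQ = mpow GG m" unfolding m mpow_Suc' by (simp only: matrix_mul_assoc[symmetric] GQ)
qed

lemma Zset_cases: "Z \<in> Zset H0 \<Longrightarrow> Z = PP \<or> Z = QQ \<or> (\<exists>m\<ge>1. Z = mpow GG m)"
  by (auto simp: Zset_def)

lemma Zset_mult:
  assumes "Z1 \<in> Zset H0" "Z2 \<in> Zset H0"
  shows "Z1 ** Z2 \<in> Zset H0 \<or> Z1 ** Z2 = 0"
proof -
  have PZ: "PP \<in> Zset H0" and QZ: "QQ \<in> Zset H0" and GZ: "\<And>m. m \<ge> 1 \<Longrightarrow> mpow GG m \<in> Zset H0"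
    by (auto simp: Zset_def)
  from Zset_cases[OF assms(1)] Zset_cases[OF assms(2)] show ?thesis
  proof (elim disjE exE conjE)
    fix a b assume a: "a \<ge> 1" "Z1 = mpow GG a" and b: "b \<ge> 1" "Z2 = mpow GG b"
    hence "Z1 ** Z2 = mpow GG (a + b)" by (simp add: mpow_add)
    thus ?thesis using GZ[of "a+b"] a b by simp
  qed (auto simp: P_idem PQ QP Q_idem Gpow_facts PZ QZ GZ)
qed

lemma Qtype_nonzero:
  assumes "Z1 = QQ \<or> (\<exists>m\<ge>1. Z1 = mpow GG m)" "Z2 = QQ \<or> (\<exists>m\<ge>1. Z2 = mpow GG m)"
    and "Z1 ** Z2 = 0"
  shows "QQ = 0"
  using assms
proof (elim disjE exE conjE)
  fix a b assume a: "a \<ge> 1" "Z1 = mpow GG a" and b: "b \<ge> 1" "Z2 = mpow GG b" and "Z1 ** Z2 = 0"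
  hence "mpow GG (a + b) = 0" by (simp add: mpow_add)
  thus ?thesis using Gpow_zero[of "a+b"] a by simp
qed (auto simp: Q_idem Gpow_facts intro: Gpow_zero)

lemma Gamma_mult:
  assumes "A \<in> Gamma H0 V a" "B \<in> Gamma H0 V b"
  shows "A ** B \<in> Gamma H0 V (a + b)"
  using assms unfolding Gamma_def
proof (rule cspan_mult[rotated])
  fix x y assume "x \<in> {word_prod V Zs |Zs. length Zs = Suc a \<and> set Zs \<subseteq> Zset H0}"
    "y \<in> {word_prod V Zs |Zs. length Zs = Suc b \<and> set Zs \<subseteq> Zset H0}"
  then obtain Zs Ws where x: "x = word_prod V Zs" "length Zs = Suc a" "set Zs \<subseteq> Zset H0"
    and y: "y = word_prod V Ws" "length Ws = Suc b" "set Ws \<subseteq> Zset H0" by blast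
  have ne: "Zs \<noteq> []" "Ws \<noteq> []" using x y by auto
  let ?R = "butlast Zs @ (last Zs ** hd Ws) # tl Ws"
  have xy: "x ** y = word_prod V ?R" using wp_mult[OF ne] x y by simp
  have len: "length ?R = Suc (a + b)" using x y by simp
  have lZ: "last Zs \<in> Zset H0" "hd Ws \<in> Zset H0" using ne x y by auto
  show "x ** y \<in> cspan {word_prod V Zs |Zs. length Zs = Suc (a + b) \<and> set Zs \<subseteq> Zset H0}"
  proof (cases "last Zs ** hd Ws = 0")
    case True
    hence "x ** y = 0" using xy wp_zero[of ?R V] by simp
    thus ?thesis by (simp add: cspan.zero)
  next
    case False
    hence "last Zs ** hd Ws \<in> Zset H0" using Zset_mult[OF lZ] by blast
    moreover have "set (butlast Zs) \<subseteq> Zset H0" using x by (meson in_set_butlastD subset_iff)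
    moreover have "set (tl Ws) \<subseteq> Zset H0" using y ne by (cases Ws) auto
    ultimately have "set ?R \<subseteq> Zset H0" by auto
    thus ?thesis using xy len by (intro cspan.base) blast
  qed
qed

lemma star_sub: "T \<in> Gamma_star H0 V n \<Longrightarrow> T \<in> Gamma H0 V n"
  unfolding Gamma_star_def Gamma_def by (erule cspan_mono) blast

lemma star_gen:
  assumes "length Zs = Suc n" "set Zs \<subseteq> Zset H0" "hd Zs ** last Zs = 0"
  shows "PP ** word_prod V Zs ** PP = 0 \<and> QQ ** word_prod V Zs ** QQ = 0"
proof -
  have ne: "Zs \<noteq> []" using assms by auto
  obtain X where X: "word_prod V Zs = hd Zs ** X" using wp_hd[OF ne] by blast
  obtain Y where Y: "word_prod V Zs = Y ** last Zs" using wp_last[OF ne] by blast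
  have h: "hd Zs \<in> Zset H0" and l: "last Zs \<in> Zset H0" using ne assms by auto
  have Pl: "PP ** word_prod V Zs = 0" if "hd Zs = QQ \<or> (\<exists>m\<ge>1. hd Zs = mpow GG m)"
    using that unfolding X by (auto simp: matrix_mul_assoc PQ Gpow_facts times0_left)
  have Pr: "word_prod V Zs ** PP = 0" if "last Zs = QQ \<or> (\<exists>m\<ge>1. last Zs = mpow GG m)"
    using that unfolding Y by (auto simp: matrix_mul_assoc[symmetric] QP Gpow_facts mm_rzero)
  have Ql: "QQ ** word_prod V Zs = 0" if "hd Zs = PP"
    using that unfolding X by (auto simp: matrix_mul_assoc QP times0_left)
  have Qr: "word_prod V Zs ** QQ = 0" if "last Zs = PP"
    using that unfolding Y by (auto simp: matrix_mul_assoc[symmetric] PQ mm_rzero)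
  show ?thesis
  proof (cases "hd Zs = PP")
    case hP: True
    show ?thesis
    proof (cases "last Zs = PP")
      case True
      hence "PP = 0" using hP assms(3) P_idem by simp
      thus ?thesis using Ql hP by (simp add: times0_left)
    next
      case False
      hence "word_prod V Zs ** PP = 0" using Zset_cases[OF l] Pr by blast
      moreover have "QQ ** word_prod V Zs = 0" using Ql hP by blast
      ultimately show ?thesis by (metis matrix_mul_assoc times0_left mm_rzero)
    qed
  next
    case hQ: False
    hence hq: "hd Zs = QQ \<or> (\<exists>m\<ge>1. hd Zs = mpow GG m)" using Zset_cases[OF h] by blast
    show ?thesis
    proof (cases "last Zs = PP")
      case True
      thus ?thesis using Pl[OF hq] Qr by (metis matrix_mul_assoc times0_left mm_rzero)
    next
      case False
      hence "last Zs = QQ \<or> (\<exists>m\<ge>1. last Zs = mpow GG m)" using Zset_cases[OF l] by blast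
      hence "QQ = 0" using Qtype_nonzero[OF hq _ assms(3)] by blast
      thus ?thesis using Pl[OF hq] by (simp add: times0_left mm_rzero)
    qed
  qed
qed

lemma star_span:
  assumes "T \<in> Gamma_star H0 V n"
  shows "PP ** T ** PP = 0 \<and> QQ ** T ** QQ = 0"
  using assms unfolding Gamma_star_def
proof (induction T rule: cspan.induct)
  case zero thus ?case by (simp add: times0_left mm_rzero)
next
  case (base A) thus ?case using star_gen by blast
next
  case (add A B) thus ?case by (simp add: matrix_add_ldistrib mm_rdistrib)
next
  case (scale A c) thus ?case by (simp add: cscale_mult_left cscale_mult_right cscale_zero)
qed


lemma chain:
  "Ts \<noteq> [] \<Longrightarrow> length ns = length Ts \<Longrightarrow> (\<forall>j<length Ts. Ts!j \<in> Gamma_star H0 V (ns!j)) \<Longrightarrow>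
   foldr (**) Ts (mat 1) \<in> Gamma H0 V (sum_list ns) \<and>
   (even (length Ts) \<longrightarrow> PP ** foldr (**) Ts (mat 1) ** QQ = 0 \<and> QQ ** foldr (**) Ts (mat 1) ** PP = 0) \<and>
   (odd (length Ts) \<longrightarrow> PP ** foldr (**) Ts (mat 1) ** PP = 0 \<and> QQ ** foldr (**) Ts (mat 1) ** QQ = 0)"
proof (induction Ts arbitrary: ns)
  case Nil thus ?case by simp
next
  case (Cons T Ts)
  obtain n ns' where ns: "ns = n # ns'" "length ns' = length Ts" using Cons.prems(2) by (cases ns) auto
  have T: "T \<in> Gamma_star H0 V n" using Cons.prems(3) ns by (metis length_Cons nth_Cons_0 zero_less_Suc)
  have TP: "PP ** T ** PP = 0" "QQ ** T ** QQ = 0" using star_span[OF T] by auto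
  show ?case
  proof (cases "Ts = []")
    case True
    thus ?thesis using ns T TP star_sub[OF T] by simp
  next
    case False
    have Ts: "\<forall>j<length Ts. Ts!j \<in> Gamma_star H0 V (ns'!j)"
      using Cons.prems(3) ns by (metis Suc_mono length_Cons nth_Cons_Suc)
    let ?R = "foldr (**) Ts (mat 1)"
    have IH: "?R \<in> Gamma H0 V (sum_list ns') \<and>
      (even (length Ts) \<longrightarrow> PP ** ?R ** QQ = 0 \<and> QQ ** ?R ** PP = 0) \<and>
      (odd (length Ts) \<longrightarrow> PP ** ?R ** PP = 0 \<and> QQ ** ?R ** QQ = 0)"
      using Cons.IH[OF False ns(2) Ts] .
    have fe: "foldr (**) (T # Ts) (mat 1) = T ** ?R" by simp
    have sp: "X ** (T ** ?R) ** Y = (X ** T ** PP) ** (PP ** ?R ** Y) + (X ** T ** QQ) ** (QQ ** ?R ** Y)" for X Y :: "'n cmat"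
      by (rule split_mid[OF PQ_sum P_idem Q_idem])
    have G: "T ** ?R \<in> Gamma H0 V (sum_list ns)"
      using Gamma_mult[OF star_sub[OF T], of ?R "sum_list ns'"] IH ns by simp
    show ?thesis
    proof (cases "even (length Ts)")
      case True
      thus ?thesis using G IH TP unfolding fe by (simp add: sp times0_left mm_rzero)
    next
      case False
      thus ?thesis using G IH TP unfolding fe by (simp add: sp times0_left mm_rzero)
    qed
  qed
qed

end

theorem lemma4:
  fixes H0 V :: "complex ^ 'n::finite ^ 'n" and L :: nat
  assumes "hermitian H0" and "hermitian V"
    and hyp: "\<forall>n < L. \<forall>T \<in> Gamma H0 V n. ground_proj H0 ** T ** ground_proj H0 \<in> CP0 H0"
  shows "\<forall>k \<ge> 1. \<forall>ns Ts. length ns = 2 * k \<and> length Ts = 2 * k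
      \<and> sum_list ns < L \<and> (\<forall>j < 2 * k. Ts ! j \<in> Gamma_star H0 V (ns ! j))
      \<longrightarrow> foldr (**) Ts (mat 1) ** ground_proj H0 \<in> CP0 H0
        \<and> ground_proj H0 ** foldr (**) Ts (mat 1) \<in> CP0 H0"
proof (intro allI impI)
  fix k :: nat and ns and Ts :: "'n cmat list"
  assume k: "k \<ge> 1" and h: "length ns = 2 * k \<and> length Ts = 2 * k
      \<and> sum_list ns < L \<and> (\<forall>j < 2 * k. Ts ! j \<in> Gamma_star H0 V (ns ! j))"
  let ?R = "foldr (**) Ts (mat 1)"
  let ?P = "ground_proj H0" and ?Q = "excited_proj H0"
  have ne: "Ts \<noteq> []" using k h by auto
  have c: "?R \<in> Gamma H0 V (sum_list ns) \<and> ?P ** ?R ** ?Q = 0 \<and> ?Q ** ?R ** ?P = 0"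
    using chain[OF assms(1) ne, of ns V] h by auto
  have PRP: "?P ** ?R ** ?P \<in> CP0 H0" using hyp h c by blast
  have sum: "?P + ?Q = mat 1" using PQ_sum[OF assms(1)] .
  have "?R ** ?P = (?P + ?Q) ** ?R ** ?P" using sum by (simp add: matrix_mul_lid)
  also have "\<dots> = ?P ** ?R ** ?P" using c by (simp add: mm_rdistrib)
  finally have 1: "?R ** ?P = ?P ** ?R ** ?P" .
  have "?P ** ?R = ?P ** ?R ** (?P + ?Q)" using sum by (simp add: matrix_mul_rid)
  also have "\<dots> = ?P ** ?R ** ?P" using c by (simp add: matrix_add_ldistrib)
  finally have 2: "?P ** ?R = ?P ** ?R ** ?P" .
  show "?R ** ?P \<in> CP0 H0 \<and> ?P ** ?R \<in> CP0 H0" using 1 2 PRP by simp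
qed

end
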